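(* Assume $C\succ 0$ and $A_1,\dots,A_m$ are linearly independent. Let $X(t)$ be a differentiable solution of the second-ansatz dynamics $$\mathrm{vec}(\dot X) = -\bigl(I - G\mathcal{A}^T(\mathcal{A}G\mathcal{A}^T)^{-1} \mathcal{A}\bigr)G\,\mathrm{vec}(C),\qquad G=X\otimes X.$$ Then at any time $t$ with $X(t)\succ 0$, $$\frac{d}{dt}\ln\det X(t) \ \ge\ -\sqrt{n}\,\mathrm{tr}(CX(t)).$$
   Context: $C,A_1,\dots,A_m$ are symmetric $n\times n$ matrices and $b\in\mathbb{R}^m$. For an $n\times n$ matrix $M$, $\mathrm{vec}(M)\in\mathbb{R}^{n^2}$ is obtained by stacking the columns of $M$; $\otimes$ is the Kronecker product. $\mathcal{A}$ is the $m\times n^2$ matrix whose $\ell$-th row is $\mathrm{vec}(A_\ell)^T$. *)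

theory Defs
  imports "HOL-Analysis.Analysis"
begin

definition pos_def :: "real^'n^'n \<Rightarrow> bool" where
  "pos_def M \<longleftrightarrow> transpose M = M \<and> (\<forall>x. x \<noteq> 0 \<longrightarrow> 0 < x \<bullet> (M *v x))"

text \<open>Column-stacking vectorisation. The index (i,j) stands for the entry in row i and
  column j, i.e. position i + n*j of vec(M) (columns stacked).\<close>
definition vecM :: "'a^'n^'k \<Rightarrow> 'a^('k \<times> 'n)" where
  "vecM M = (\<chi> ij. M $ fst ij $ snd ij)"

text \<open>Kronecker product, with rows/columns indexed consistently with vecM:
  row (q,p) is position q + n*p, column (s,r) is position s + n*r, so that
  (A \<otimes> B)_{(q,p),(s,r)} = A_{p r} B_{q s}.\<close>
definition kron :: "real^'n^'n \<Rightarrow> real^'n^'n \<Rightarrow> real^('n \<times> 'n)^('n \<times> 'n)" where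
  "kron A B = (\<chi> qp sr. A $ snd qp $ snd sr * B $ fst qp $ fst sr)"

definition opA :: "('m \<Rightarrow> real^'n^'n) \<Rightarrow> real^('n \<times> 'n)^'m" where
  "opA A = (\<chi> l. vecM (A l))"

end

theory Submission
  imports Defs
begin



lemma quad_disc:
  fixes a b c :: real
  assumes "\<And>t. 0 \<le> a*t^2 + 2*b*t + c" "0 \<le> a"
  shows "b^2 \<le> a*c"
proof (cases "a = 0")
  case True
  show ?thesis
  proof (rule ccontr)
    assume "\<not> ?thesis"
    then have "b \<noteq> 0" using True by simp
    have "0 \<le> a*(-(c+1)/(2*b))^2 + 2*b*(-(c+1)/(2*b)) + c" by (rule assms(1))
    also have "\<dots> = -1" using True \<open>b\<noteq>0\<close> by (simp add: field_simps)
    finally show False by simp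
  qed
next
  case False
  then have ap: "a > 0" using assms(2) by simp
  have "0 \<le> a*(-b/a)^2 + 2*b*(-b/a) + c" by (rule assms(1))
  also have "\<dots> = c - b^2/a" using ap by (simp add: field_simps power2_eq_square)
  finally show ?thesis using ap by (simp add: field_simps)
qed

lemma form_sym:
  fixes M :: "real^'n^'n"
  assumes "transpose M = M"
  shows "x \<bullet> (M *v y) = y \<bullet> (M *v x)"
  by (metis assms dot_lmul_matrix inner_commute transpose_matrix_vector)

lemma form_CS:
  fixes M :: "real^'n^'n"
  assumes "transpose M = M" "\<And>z. 0 \<le> z \<bullet> (M *v z)"
  shows "(x \<bullet> (M *v y))^2 \<le> (y \<bullet> (M *v y)) * (x \<bullet> (M *v x))"
proof (rule quad_disc)
  fix t :: real
  have "0 \<le> (x + t *\<^sub>R y) \<bullet> (M *v (x + t *\<^sub>R y))" by (rule assms(2))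
  also have "\<dots> = (y \<bullet> (M *v y))*t^2 + 2*(x \<bullet> (M *v y))*t + x \<bullet> (M *v x)"
    using form_sym[OF assms(1), of x y]
    by (simp add: matrix_vector_right_distrib matrix_vector_mult_scaleR inner_add_left inner_add_right
      power2_eq_square algebra_simps)
  finally show "0 \<le> (y \<bullet> (M *v y))*t^2 + 2*(x \<bullet> (M *v y))*t + x \<bullet> (M *v x)" .
  show "0 \<le> y \<bullet> (M *v y)" by (rule assms(2))
qed



definition outer_sum :: "('k \<Rightarrow> real^'n) \<Rightarrow> 'k set \<Rightarrow> real^'n^'n" where
  "outer_sum v I = (\<chi> i j. \<Sum>k\<in>I. v k $ i * v k $ j)"

lemma axis_form: "axis a 1 \<bullet> (P *v x) = (P *v x) $ a"
  by (simp add: inner_axis')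

lemma transpose_entry: "transpose P = (P::real^'n^'n) \<Longrightarrow> P$i$j = P$j$i"
  by (metis transpose_def vec_lambda_beta)

lemma psd_offdiag_zero:
  fixes P :: "real^'n^'n"
  assumes "transpose P = P" "\<And>z. 0 \<le> z \<bullet> (P *v z)" "P$a$a = 0"
  shows "P$a$j = 0"
proof -
  have "((axis j 1) \<bullet> (P *v axis a 1))^2 \<le> (axis a 1 \<bullet> (P *v axis a 1)) * (axis j 1 \<bullet> (P *v axis j 1))"
    by (rule form_CS[OF assms(1,2)])
  moreover have "axis a 1 \<bullet> (P *v axis a 1) = P$a$a"
    by (simp add: axis_form matrix_vector_mul_component inner_axis)
  moreover have "(axis j 1) \<bullet> (P *v axis a 1) = P$a$j"
    using transpose_entry[OF assms(1)] by (simp add: axis_form matrix_vector_mul_component inner_axis)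
  ultimately show ?thesis using assms(3) by simp
qed

lemma decomp_aux:
  fixes I :: "'n::finite set"
  assumes "finite I"
  shows "\<forall>P::real^'n^'n. transpose P = P \<and> (\<forall>z. 0 \<le> z \<bullet> (P *v z)) \<and> (\<forall>i j. i \<notin> I \<longrightarrow> P$i$j = 0)
     \<longrightarrow> (\<exists>v. P = outer_sum v I)"
  using assms
proof (induction I rule: finite_induct)
  case empty
  then show ?case by (auto simp: outer_sum_def vec_eq_iff)
next
  case (insert a I)
  show ?case
  proof (intro allI impI, elim conjE)
    fix P :: "real^'n^'n"
    assume sym: "transpose P = P" and psd: "\<forall>z. 0 \<le> z \<bullet> (P *v z)"
      and supp: "\<forall>i j. i \<notin> insert a I \<longrightarrow> P$i$j = 0"
    have Pij: "P$i$j = P$j$i" for i j using transpose_entry[OF sym] .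
    have Paa: "0 \<le> P$a$a"
      using psd[rule_format, of "axis a 1"] by (simp add: axis_form matrix_vector_mul_component inner_axis)
    show "\<exists>v. P = outer_sum v (insert a I)"
    proof (cases "P$a$a = 0")
      case True
      have "P$a$j = 0" for j using psd_offdiag_zero[OF sym _ True] psd by blast
      then have "\<forall>i j. i \<notin> I \<longrightarrow> P$i$j = 0" using supp by (metis insert_iff)
      then obtain v where v: "P = outer_sum v I" using insert.IH sym psd by blast
      show ?thesis
      proof
        show "P = outer_sum (v(a := 0)) (insert a I)"
          using v insert.hyps by (auto simp: outer_sum_def vec_eq_iff intro!: sum.cong)
      qed
    next
      case False
      with Paa have Pp: "P$a$a > 0" by simp
      define p where "p = (\<chi> i. P$i$a)"
      define P' where "P' = P - (1 / P$a$a) *\<^sub>R (\<chi> i j. p$i * p$j)"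
      have pa: "p$a = P$a$a" by (simp add: p_def)
      have P'e: "P'$i$j = P$i$j - P$i$a * P$j$a / P$a$a" for i j
        by (simp add: P'_def p_def)
      have sym': "transpose P' = P'"
        by (simp add: vec_eq_iff P'e transpose_def Pij)
      have Px: "(P *v x) $ a = p \<bullet> x" for x
        by (simp add: matrix_vector_mul_component p_def inner_vec_def Pij)
      have P'x: "x \<bullet> (P' *v x) = x \<bullet> (P *v x) - (p \<bullet> x)^2 / P$a$a" for x
      proof -
        have "(\<chi> i j. p$i * p$j) *v x = (p \<bullet> x) *\<^sub>R p"
          by (simp add: vec_eq_iff matrix_vector_mult_def inner_vec_def sum_distrib_left mult.commute mult.left_commute)
        then show ?thesis
          by (simp add: P'_def matrix_vector_mult_diff_rdistrib scaleR_matrix_vector_assoc[symmetric] inner_diff_right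
                power2_eq_square inner_commute)
      qed
      have psd': "0 \<le> z \<bullet> (P' *v z)" for z
      proof -
        define t where "t = (p \<bullet> z) / P$a$a"
        have "0 \<le> (z - t *\<^sub>R axis a 1) \<bullet> (P *v (z - t *\<^sub>R axis a 1))" using psd by blast
        also have "\<dots> = z \<bullet> (P *v z) - 2*t*(axis a 1 \<bullet> (P *v z)) + t^2 * (axis a 1 \<bullet> (P *v axis a 1))"
          using form_sym[OF sym, of z "axis a 1"]
          by (simp add: matrix_vector_mult_diff_distrib matrix_vector_mult_scaleR inner_diff_left inner_diff_right
             power2_eq_square algebra_simps)
        also have "\<dots> = z \<bullet> (P' *v z)"
        proof -
          have e: "(P *v axis a 1)$a = P$a$a" using Px[of "axis a 1"] by (simp add: inner_axis pa)
          have e2: "p \<bullet> axis a 1 = P$a$a" by (simp add: inner_axis pa)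
          have "z \<bullet> (P *v z) - 2 * t * (p \<bullet> z) + t\<^sup>2 * P$a$a = z \<bullet> (P *v z) - (p \<bullet> z)\<^sup>2 / P$a$a"
            using Pp by (simp add: t_def power2_eq_square field_simps)
          then show ?thesis unfolding P'x axis_form Px e2 .
        qed
        finally show ?thesis .
      qed
      have supp': "\<forall>i j. i \<notin> I \<longrightarrow> P'$i$j = 0"
      proof (intro allI impI)
        fix i j assume "i \<notin> I"
        show "P'$i$j = 0"
        proof (cases "i = a")
          case True then show ?thesis using Pp by (simp add: P'e Pij)
        next
          case False then show ?thesis using supp \<open>i \<notin> I\<close> by (simp add: P'e)
        qed
      qed
      obtain v where v: "P' = outer_sum v I" using insert.IH sym' psd' supp' by blast
      show ?thesis
      proof
        show "P = outer_sum (v(a := (1 / sqrt (P$a$a)) *\<^sub>R p)) (insert a I)"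
        proof -
          have 1: "P$i$j = P'$i$j + P$i$a * P$j$a / P$a$a" for i j by (simp add: P'e)
          have 2: "outer_sum (v(a:=w)) (insert a I) $i$j = w$i*w$j + outer_sum v I $i$j" for w i j
          proof -
            have "(\<Sum>k\<in>I. (v(a:=w)) k $ i * (v(a:=w)) k $ j) = (\<Sum>k\<in>I. v k $ i * v k $ j)"
              using insert.hyps(2) by (intro sum.cong) auto
            then show ?thesis using insert.hyps by (simp add: outer_sum_def)
          qed
          have 3: "((1 / sqrt (P$a$a)) *\<^sub>R p)$i * ((1 / sqrt (P$a$a)) *\<^sub>R p)$j = P$i$a * P$j$a / P$a$a" for i j
            using Pp by (simp add: p_def real_sqrt_mult[symmetric] field_simps)
          show ?thesis unfolding vec_eq_iff 2 3 v[symmetric] by (intro allI) (metis 1 add.commute)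
        qed
      qed
    qed
  qed
qed

lemma decomp:
  fixes P :: "real^'n^'n"
  assumes "transpose P = P" "\<And>z. 0 \<le> z \<bullet> (P *v z)"
  shows "\<exists>v::'n \<Rightarrow> real^'n. P = outer_sum v UNIV"
  using decomp_aux[of "UNIV::'n set"] assms by auto



lemma inner_mv_transpose: "(x::real^'m) \<bullet> ((V::real^'n^'m) *v z) = (transpose V *v x) \<bullet> z"
  by (metis dot_lmul_matrix transpose_matrix_vector)

lemma outer_sum_eq: "outer_sum v UNIV = transpose (\<chi> k. v k) ** (\<chi> k. v k)"
  by (simp add: outer_sum_def matrix_matrix_mult_def transpose_def vec_eq_iff)

lemma inv_props:
  fixes A :: "real^'n^'n"
  assumes "invertible A"
  shows "A ** matrix_inv A = mat 1" "matrix_inv A ** A = mat 1"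
proof -
  have "\<exists>A'. A ** A' = mat 1 \<and> A' ** A = mat 1" using assms by (simp add: invertible_def)
  then have "A ** matrix_inv A = mat 1 \<and> matrix_inv A ** A = mat 1"
    unfolding matrix_inv_def by (rule someI_ex)
  then show "A ** matrix_inv A = mat 1" "matrix_inv A ** A = mat 1" by auto
qed

lemma ker_invertible:
  fixes A :: "real^'n^'n"
  assumes "\<And>x. A *v x = 0 \<Longrightarrow> x = 0"
  shows "invertible A"
proof -
  have "\<exists>B. B ** A = mat 1" using matrix_left_invertible_ker[of A] assms by blast
  then show ?thesis by (simp add: invertible_left_inverse)
qed

lemma pd_invertible:
  fixes X :: "real^'n^'n"
  assumes "pos_def X" shows "invertible X"
proof (rule ker_invertible)
  fix x assume "X *v x = 0"
  then have "x \<bullet> (X *v x) = 0" by simp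
  then show "x = 0" using assms unfolding pos_def_def by force
qed

lemma pd_det_pos:
  fixes X :: "real^'n^'n"
  assumes "pos_def X" shows "det X > 0"
proof -
  have psd: "0 \<le> z \<bullet> (X *v z)" for z
  proof (cases "z = 0")
    case True then show ?thesis by simp
  next
    case False then show ?thesis using assms unfolding pos_def_def by (simp add: less_imp_le)
  qed
  have symX: "transpose X = X" using assms unfolding pos_def_def by simp
  obtain v :: "'n \<Rightarrow> real^'n" where v: "X = outer_sum v UNIV"
    using decomp[OF symX psd] by blast
  have "det X = det (\<chi> k. v k) * det (\<chi> k. v k)"
    unfolding v outer_sum_eq det_mul det_transpose ..
  moreover have "det X \<noteq> 0" using pd_invertible[OF assms] by (simp add: invertible_det_nz)
  ultimately have "det (\<chi> k. v k) \<noteq> 0" by simp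
  then have "0 < det (\<chi> k. v k) * det (\<chi> k. v k)" by (simp add: zero_less_mult_iff linorder_neq_iff disj_commute)
  then show ?thesis using \<open>det X = _\<close> by simp
qed

lemma trace_sq:
  fixes B :: "real^'n^'n"
  assumes sym: "transpose B = B" and psd: "\<And>z. 0 \<le> z \<bullet> (B *v z)"
  shows "trace (B ** B) \<le> (trace B)^2" "0 \<le> trace B"
proof -
  have diag: "B$i$i = axis i 1 \<bullet> (B *v axis i 1)" for i
    by (simp add: axis_form matrix_vector_mul_component inner_axis)
  have off: "B$i$j = axis j 1 \<bullet> (B *v axis i 1)" for i j
    by (simp add: axis_form matrix_vector_mul_component inner_axis transpose_entry[OF sym, of i j])
  have dpos: "0 \<le> B$i$i" for i using psd diag by metis
  have cs: "(B$i$j)^2 \<le> B$i$i * B$j$j" for i j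
    using form_CS[OF sym psd, of "axis j 1" "axis i 1"] unfolding off[of i j] diag by (simp add: mult.commute)
  have "trace (B ** B) = (\<Sum>i\<in>UNIV. \<Sum>j\<in>UNIV. (B$i$j)^2)"
  proof -
    have "trace (B ** B) = (\<Sum>i\<in>UNIV. \<Sum>j\<in>UNIV. B$i$j * B$j$i)"
      by (simp add: trace_def matrix_matrix_mult_def)
    also have "\<dots> = (\<Sum>i\<in>UNIV. \<Sum>j\<in>UNIV. (B$i$j)^2)"
      by (intro sum.cong refl) (metis transpose_entry[OF sym] power2_eq_square)
    finally show ?thesis .
  qed
  also have "\<dots> \<le> (\<Sum>i\<in>UNIV. \<Sum>j\<in>UNIV. B$i$i * B$j$j)"
    by (intro sum_mono cs)
  also have "\<dots> = (trace B)^2"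
    by (simp add: trace_def power2_eq_square sum_product)
  finally show "trace (B ** B) \<le> (trace B)^2" .
  show "0 \<le> trace B" unfolding trace_def by (intro sum_nonneg dpos)
qed

lemma trace_CXCX:
  fixes C X :: "real^'n^'n"
  assumes symC: "transpose C = C" and psdC: "\<And>z. 0 \<le> z \<bullet> (C *v z)"
    and symX: "transpose X = X" and psdX: "\<And>z. 0 \<le> z \<bullet> (X *v z)"
  shows "trace (C ** X ** C ** X) \<le> (trace (C ** X))^2" "0 \<le> trace (C ** X)"
proof -
  obtain v :: "'n \<Rightarrow> real^'n" where v: "X = outer_sum v UNIV" using decomp[of X] symX psdX by blast
  define V where "V = (\<chi> k. v k)"
  have XV: "X = transpose V ** V" using v outer_sum_eq V_def by simp
  define B where "B = V ** C ** transpose V"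
  have symB: "transpose B = B" unfolding B_def
    by (simp add: matrix_transpose_mul symC matrix_mul_assoc)
  have psdB: "0 \<le> z \<bullet> (B *v z)" for z
  proof -
    have "z \<bullet> (B *v z) = (transpose V *v z) \<bullet> (C *v (transpose V *v z))"
      unfolding B_def matrix_vector_mul_assoc[symmetric] by (rule inner_mv_transpose)
    then show ?thesis using psdC by simp
  qed
  have t1: "trace (C ** X) = trace B"
  proof -
    have "trace (C ** X) = trace ((C ** transpose V) ** V)" unfolding XV by (simp add: matrix_mul_assoc)
    also have "\<dots> = trace (V ** (C ** transpose V))" by (rule trace_mul_sym)
    finally show ?thesis unfolding B_def by (simp add: matrix_mul_assoc)
  qed
  have "trace (C ** X ** C ** X) = trace ((C ** transpose V ** V ** C ** transpose V) ** V)"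
    unfolding XV by (simp add: matrix_mul_assoc)
  also have "\<dots> = trace (V ** (C ** transpose V ** V ** C ** transpose V))" by (rule trace_mul_sym)
  also have "\<dots> = trace (B ** B)" unfolding B_def by (simp add: matrix_mul_assoc)
  finally have t2: "trace (C ** X ** C ** X) = trace (B ** B)" .
  show "trace (C ** X ** C ** X) \<le> (trace (C ** X))^2" "0 \<le> trace (C ** X)"
    unfolding t1 t2 using trace_sq[OF symB psdB] by auto
qed



lemma transpose_diff: "transpose ((P::real^'n^'m) - Q) = transpose P - transpose Q"
  by (simp add: transpose_def vec_eq_iff)

lemma sum_pairs: "(\<Sum>ij\<in>(UNIV::('a::finite \<times> 'b::finite) set). f ij) = (\<Sum>i\<in>UNIV. \<Sum>j\<in>UNIV. f (i,j))"
  by (simp add: UNIV_Times_UNIV[symmetric] sum.cartesian_product del: UNIV_Times_UNIV)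

lemma kron_vec: "kron P Q *v vecM W = vecM (Q ** W ** transpose P)"
proof -
  have "(kron P Q *v vecM W) $ (q,p) = vecM (Q ** W ** transpose P) $ (q,p)" for q p
  proof -
    have "(kron P Q *v vecM W) $ (q,p) = (\<Sum>s\<in>UNIV. \<Sum>r\<in>UNIV. P$p$r * Q$q$s * W$s$r)"
      by (simp add: matrix_vector_mult_def kron_def vecM_def sum_pairs)
    also have "\<dots> = (\<Sum>r\<in>UNIV. \<Sum>s\<in>UNIV. P$p$r * Q$q$s * W$s$r)"
      by (rule sum.swap)
    also have "\<dots> = (\<Sum>r\<in>UNIV. (\<Sum>s\<in>UNIV. Q$q$s * W$s$r) * P$p$r)"
      by (simp add: sum_distrib_left sum_distrib_right mult_ac)
    also have "\<dots> = vecM (Q ** W ** transpose P) $ (q,p)"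
      by (simp add: vecM_def matrix_matrix_mult_def transpose_def)
    finally show ?thesis .
  qed
  then show ?thesis by (simp add: vec_eq_iff)
qed

lemma kron_transpose: "transpose (kron P Q) = kron (transpose P) (transpose Q)"
  by (simp add: kron_def transpose_def vec_eq_iff)

lemma vecM_inner: "vecM W \<bullet> vecM Z = trace (transpose W ** (Z::real^'n^'n))"
  by (simp add: vecM_def inner_vec_def sum_pairs trace_def matrix_matrix_mult_def transpose_def)
     (subst sum.swap, simp)

lemma vecM_surj: "w = vecM (\<chi> i j. w $ (i,j))"
  by (simp add: vecM_def vec_eq_iff)

lemma vecM_eq0: "vecM W = 0 \<longleftrightarrow> W = 0"
  by (auto simp: vecM_def vec_eq_iff)

lemma opA_transpose: "transpose (opA A) *v y = vecM (\<Sum>l\<in>UNIV. y$l *\<^sub>R A l)"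
  by (simp add: vec_eq_iff opA_def vecM_def matrix_vector_mult_def transpose_def mult.commute)

lemma G_form:
  fixes X :: "real^'n^'n"
  assumes pd: "pos_def X"
  shows "0 \<le> w \<bullet> (kron X X *v w)" "w \<bullet> (kron X X *v w) = 0 \<Longrightarrow> w = 0"
proof -
  have symX: "transpose X = X" using pd unfolding pos_def_def by simp
  have psd: "0 \<le> z \<bullet> (X *v z)" for z
  proof (cases "z = 0")
    case True then show ?thesis by simp
  next
    case False then show ?thesis using pd unfolding pos_def_def by (simp add: less_imp_le)
  qed
  obtain v :: "'n \<Rightarrow> real^'n" where v: "X = outer_sum v UNIV" using decomp[OF symX psd] by blast
  define V where "V = (\<chi> k. v k)"
  have XV: "X = transpose V ** V" using v outer_sum_eq V_def by simp
  define W where "W = (\<chi> i j. w $ (i,j))"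
  have wW: "w = vecM W" unfolding W_def by (rule vecM_surj)
  define B where "B = V ** W ** transpose V"
  have eq: "w \<bullet> (kron X X *v w) = trace (transpose B ** B)"
  proof -
    have "w \<bullet> (kron X X *v w) = trace (transpose W ** (X ** W ** X))"
      unfolding wW kron_vec vecM_inner symX ..
    also have "\<dots> = trace ((transpose W ** transpose V ** V ** W ** transpose V) ** V)"
      unfolding XV by (simp add: matrix_mul_assoc)
    also have "\<dots> = trace (V ** (transpose W ** transpose V ** V ** W ** transpose V))" by (rule trace_mul_sym)
    also have "\<dots> = trace (transpose B ** B)" unfolding B_def
      by (simp add: matrix_transpose_mul matrix_mul_assoc)
    finally show ?thesis .
  qed
  have tr: "trace (transpose B ** B) = (\<Sum>i\<in>UNIV. \<Sum>k\<in>UNIV. (B$k$i)^2)"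
    by (simp add: trace_def matrix_matrix_mult_def transpose_def power2_eq_square)
  show "0 \<le> w \<bullet> (kron X X *v w)" unfolding eq tr by (intro sum_nonneg) simp
  assume "w \<bullet> (kron X X *v w) = 0"
  then have "(\<Sum>i\<in>UNIV. \<Sum>k\<in>UNIV. (B$k$i)^2) = 0" unfolding eq tr .
  then have "\<forall>i\<in>UNIV. (\<Sum>k\<in>UNIV. (B$k$i)^2) = 0"
    by (subst (asm) sum_nonneg_eq_0_iff) (auto intro: sum_nonneg)
  then have "\<forall>i k. (B$k$i)^2 = 0"
    by (subst (asm) sum_nonneg_eq_0_iff) auto
  then have B0: "B = 0" by (simp add: vec_eq_iff)
  have "X ** W ** X = transpose V ** B ** V" unfolding XV B_def by (simp add: matrix_mul_assoc)
  then have XWX: "X ** W ** X = 0" using B0 by simp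
  have inv: "X ** matrix_inv X = mat 1" "matrix_inv X ** X = mat 1"
    using inv_props[OF pd_invertible[OF pd]] by auto
  have "W = matrix_inv X ** (X ** W ** X) ** matrix_inv X"
    by (simp add: matrix_mul_assoc inv) (simp add: matrix_mul_assoc[symmetric] inv)
  then have "W = 0" using XWX by simp
  then show "w = 0" using wW by (simp add: vecM_def vec_eq_iff)
qed

lemma proj:
  fixes G :: "real^'k^'k" and Am :: "real^'k^'m" and K :: "real^'m^'m"
  assumes symG: "transpose G = G" and psdG: "\<And>z. 0 \<le> z \<bullet> (G *v z)"
    and KM: "K ** (Am ** G ** transpose Am) = mat 1" and symK: "transpose K = K"
  defines "S \<equiv> G - G ** transpose Am ** K ** Am ** G"
  shows "transpose S = S" "0 \<le> w \<bullet> (S *v w)" "w \<bullet> (S *v w) \<le> w \<bullet> (G *v w)"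
proof -
  show "transpose S = S" unfolding S_def transpose_diff
    by (simp add: matrix_transpose_mul symG symK matrix_mul_assoc)
  define z where "z = Am *v (G *v w)"
  define y where "y = K *v z"
  have Sw: "w \<bullet> (S *v w) = w \<bullet> (G *v w) - z \<bullet> y"
  proof -
    have "w \<bullet> ((G ** transpose Am ** K ** Am ** G) *v w) = w \<bullet> (G *v (transpose Am *v y))"
      by (simp only: y_def z_def matrix_vector_mul_assoc[symmetric])
    also have "\<dots> = (G *v w) \<bullet> (transpose Am *v y)"
      by (simp add: inner_mv_transpose symG)
    also have "\<dots> = z \<bullet> y" unfolding z_def
      by (simp add: inner_mv_transpose inner_commute)
    finally show ?thesis unfolding S_def by (simp add: matrix_vector_mult_diff_rdistrib inner_diff_right)
  qed
  have My: "(Am ** G ** transpose Am) *v y = z"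
  proof -
    have "(Am ** G ** transpose Am) ** K = mat 1" using KM matrix_left_right_inverse by blast
    then show ?thesis unfolding y_def matrix_vector_mul_assoc by simp
  qed
  have zy: "z \<bullet> y = (transpose Am *v y) \<bullet> (G *v (transpose Am *v y))"
  proof -
    have "z \<bullet> y = y \<bullet> ((Am ** G ** transpose Am) *v y)" using My by (simp add: inner_commute)
    also have "\<dots> = (transpose Am *v y) \<bullet> (G *v (transpose Am *v y))"
      by (simp add: matrix_vector_mul_assoc[symmetric] inner_mv_transpose)
    finally show ?thesis .
  qed
  have zy2: "(G *v w) \<bullet> (transpose Am *v y) = z \<bullet> y"
    unfolding z_def by (simp add: inner_mv_transpose inner_commute)
  have "(w - transpose Am *v y) \<bullet> (G *v (w - transpose Am *v y))
        = w \<bullet> (G *v w) - 2 * ((G *v w) \<bullet> (transpose Am *v y)) + (transpose Am *v y) \<bullet> (G *v (transpose Am *v y))"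
    using form_sym[OF symG, of w "transpose Am *v y"]
    by (simp add: matrix_vector_mult_diff_distrib inner_diff_left inner_diff_right inner_commute algebra_simps)
  also have "\<dots> = w \<bullet> (S *v w)" unfolding Sw zy2 zy[symmetric] by simp
  finally show "0 \<le> w \<bullet> (S *v w)" using psdG by metis
  show "w \<bullet> (S *v w) \<le> w \<bullet> (G *v w)" unfolding Sw zy using psdG by simp
qed



lemma det_replace_row:
  fixes X D :: "real^'n^'n"
  assumes inv: "D = M ** X"
  shows "det (\<chi> i. if i = j then D$j else X$i) = M$j$j * det X"
proof -
  have Dj: "D$j = (\<Sum>k\<in>UNIV. M$j$k *s X$k)"
    unfolding inv by (simp add: vec_eq_iff matrix_matrix_mult_def mult.commute)
  have "det (\<chi> i. if i = j then D$j else X$i)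
      = det (\<chi> i. if i = j then (\<Sum>k\<in>UNIV. M$i$k *s X$k) else X$i)"
    by (rule arg_cong[where f=det]) (simp add: vec_eq_iff Dj)
  also have "\<dots> = (\<Sum>k\<in>UNIV. det (\<chi> i. if i = j then M$i$k *s X$k else X$i))"
    by (rule det_linear_row_sum) simp
  also have "\<dots> = (\<Sum>k\<in>UNIV. M$j$k * det (\<chi> i. if i = j then X$k else X$i))"
  proof (rule sum.cong[OF refl])
    fix k
    have "(\<chi> i. if i = j then M$i$k *s X$k else X$i) = (\<chi> i. if i = j then M$j$k *s X$k else X$i)"
      by (simp add: vec_eq_iff)
    then show "det (\<chi> i. if i = j then M$i$k *s X$k else X$i) = M$j$k * det (\<chi> i. if i = j then X$k else X$i)"
      using det_row_mul[of j "M$j$k" "\<lambda>_. X$k" "\<lambda>i. X$i"] by simp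
  qed
  also have "\<dots> = (\<Sum>k\<in>UNIV. if k = j then M$j$j * det X else 0)"
  proof (rule sum.cong[OF refl])
    fix k
    show "M$j$k * det (\<chi> i. if i = j then X$k else X$i) = (if k = j then M$j$j * det X else 0)"
    proof (cases "k = j")
      case True
      have "(\<chi> i. if i = j then X$k else X$i) = X" using True by (simp add: vec_eq_iff)
      then show ?thesis using True by simp
    next
      case False
      have "det (\<chi> i. if i = j then X$k else X$i) = 0"
        by (rule det_identical_rows[OF False]) (simp add: row_def vec_eq_iff False)
      then show ?thesis using False by simp
    qed
  qed
  also have "\<dots> = M$j$j * det X" by simp
  finally show ?thesis .
qed

lemma jacobi:
  fixes X :: "real \<Rightarrow> real^'n^'n" and D :: "real^'n^'n"
  assumes der: "\<And>i j. ((\<lambda>s. X s $ i $ j) has_real_derivative D $ i $ j) (at t)"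
    and inv: "invertible (X t)"
  shows "((\<lambda>s. det (X s)) has_real_derivative det (X t) * trace (D ** matrix_inv (X t))) (at t)"
proof -
  let ?P = "{p. p permutes (UNIV :: 'n set)}"
  have d1: "((\<lambda>s. det (X s)) has_real_derivative
      (\<Sum>p\<in>?P. of_int (sign p) * (\<Sum>j\<in>UNIV. D$j$p j * (\<Prod>i\<in>UNIV-{j}. X t $ i $ p i)))) (at t)"
    unfolding det_def
    by (intro DERIV_sum DERIV_cmult has_field_derivative_prod der)
  have "(\<Sum>p\<in>?P. of_int (sign p) * (\<Sum>j\<in>UNIV. D$j$p j * (\<Prod>i\<in>UNIV-{j}. X t $ i $ p i)))
     = (\<Sum>j\<in>UNIV. det (\<chi> i. if i = j then D$j else X t $ i))"
  proof -
    have "(\<Sum>p\<in>?P. of_int (sign p) * (\<Sum>j\<in>UNIV. D$j$p j * (\<Prod>i\<in>UNIV-{j}. X t $ i $ p i)))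
        = (\<Sum>j\<in>UNIV. \<Sum>p\<in>?P. of_int (sign p) * (D$j$p j * (\<Prod>i\<in>UNIV-{j}. X t $ i $ p i)))"
      by (simp add: sum_distrib_left sum.swap[of _ ?P])
    also have "\<dots> = (\<Sum>j\<in>UNIV. det (\<chi> i. if i = j then D$j else X t $ i))"
    proof (rule sum.cong[OF refl])
      fix j :: 'n
      have "(\<Prod>i\<in>UNIV. (\<chi> i. if i = j then D$j else X t $ i) $ i $ p i) = D$j$p j * (\<Prod>i\<in>UNIV-{j}. X t $ i $ p i)" for p :: "'n \<Rightarrow> 'n"
      proof -
        have "(\<Prod>i\<in>UNIV. (\<chi> i. if i = j then D$j else X t $ i) $ i $ p i)
           = (\<chi> i. if i = j then D$j else X t $ i) $ j $ p j * (\<Prod>i\<in>UNIV-{j}. (\<chi> i. if i = j then D$j else X t $ i) $ i $ p i)"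
          by (rule prod.remove) auto
        also have "\<dots> = D$j$p j * (\<Prod>i\<in>UNIV-{j}. X t $ i $ p i)"
        proof -
          have "(\<Prod>i\<in>UNIV-{j}. (\<chi> i. if i = j then D$j else X t $ i) $ i $ p i) = (\<Prod>i\<in>UNIV-{j}. X t $ i $ p i)"
            by (rule prod.cong) auto
          then show ?thesis by simp
        qed
        finally show ?thesis .
      qed
      then show "(\<Sum>p\<in>?P. of_int (sign p) * (D$j$p j * (\<Prod>i\<in>UNIV-{j}. X t $ i $ p i)))
          = det (\<chi> i. if i = j then D$j else X t $ i)"
        unfolding det_def by simp
    qed
    finally show ?thesis .
  qed
  also have "\<dots> = (\<Sum>j\<in>UNIV. (D ** matrix_inv (X t))$j$j * det (X t))"
  proof (rule sum.cong[OF refl])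
    fix j
    have "D = (D ** matrix_inv (X t)) ** X t"
      by (simp add: matrix_mul_assoc[symmetric] inv_props[OF inv])
    then show "det (\<chi> i. if i = j then D$j else X t $ i) = (D ** matrix_inv (X t))$j$j * det (X t)"
      by (rule det_replace_row)
  qed
  also have "\<dots> = det (X t) * trace (D ** matrix_inv (X t))"
    by (simp add: trace_def sum_distrib_left mult.commute)
  finally show ?thesis using d1 by simp
qed



lemma inv_sym:
  fixes A :: "real^'n^'n"
  assumes "invertible A" "transpose A = A"
  shows "transpose (matrix_inv A) = matrix_inv A"
proof -
  note i = inv_props[OF assms(1)]
  have "transpose (matrix_inv A) ** A = mat 1"
    using arg_cong[OF i(1), of transpose] by (simp add: matrix_transpose_mul assms(2))
  then have "transpose (matrix_inv A) = transpose (matrix_inv A) ** (A ** matrix_inv A)" by (simp add: i)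
  also have "\<dots> = matrix_inv A" by (simp add: matrix_mul_assoc \<open>transpose (matrix_inv A) ** A = mat 1\<close>)
  finally show ?thesis .
qed

lemma sqrt_bound:
  fixes x n T :: real
  assumes "x^2 \<le> n * T^2" "0 \<le> T" "0 \<le> n"
  shows "x \<le> sqrt n * T"
proof -
  have "\<bar>x\<bar> = sqrt (x^2)" by simp
  also have "\<dots> \<le> sqrt (n * T^2)" by (rule real_sqrt_le_mono[OF assms(1)])
  also have "\<dots> = sqrt n * T" using assms(2) by (simp add: real_sqrt_mult)
  finally show ?thesis by linarith
qed

theorem lemma5p1:
  fixes C :: "real^'n^'n" and A :: "'m::finite \<Rightarrow> real^'n^'n"
    and X X' :: "real \<Rightarrow> real^'n^'n" and T :: "real set" and t :: real
  assumes C_pd: "pos_def C"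
    and A_sym: "\<And>l. transpose (A l) = A l"
    and A_indep: "\<And>c. (\<Sum>l\<in>UNIV. c l *\<^sub>R A l) = 0 \<Longrightarrow> (\<forall>l. c l = 0)"
    and T_open: "open T"
    and X_deriv: "\<And>s. s \<in> T \<Longrightarrow> (X has_vector_derivative X' s) (at s)"
    and X_ode: "\<And>s. s \<in> T \<Longrightarrow>
       vecM (X' s) = - ((mat 1 - kron (X s) (X s) ** transpose (opA A)
            ** matrix_inv (opA A ** kron (X s) (X s) ** transpose (opA A)) ** opA A)
            ** kron (X s) (X s)) *v vecM C"
    and t_in: "t \<in> T"
    and X_pd: "pos_def (X t)"
  shows "\<exists>D. ((\<lambda>s. ln (det (X s))) has_real_derivative D) (at t) \<and>
             D \<ge> - sqrt (real CARD('n)) * trace (C ** X t)"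
proof -
  define X0 where "X0 = X t"
  define Y where "Y = matrix_inv X0"
  define D where "D = X' t"
  have pd0: "pos_def X0" using X_pd X0_def by simp
  have symX0: "transpose X0 = X0" using pd0 unfolding pos_def_def by simp
  have psdX0: "0 \<le> z \<bullet> (X0 *v z)" for z
  proof (cases "z = 0")
    case True then show ?thesis by simp
  next
    case False then show ?thesis using pd0 unfolding pos_def_def by (simp add: less_imp_le)
  qed
  have symC: "transpose C = C" using C_pd unfolding pos_def_def by simp
  have psdC: "0 \<le> z \<bullet> (C *v z)" for z
  proof (cases "z = 0")
    case True then show ?thesis by simp
  next
    case False then show ?thesis using C_pd unfolding pos_def_def by (simp add: less_imp_le)
  qed
  have invX0: "invertible X0" by (rule pd_invertible[OF pd0])
  note iX = inv_props[OF invX0]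
  have symY: "transpose Y = Y" unfolding Y_def by (rule inv_sym[OF invX0 symX0])
  have detpos: "det X0 > 0" by (rule pd_det_pos[OF pd0])
  have comp: "((\<lambda>s. X s $ i $ j) has_real_derivative D $ i $ j) (at t)" for i j
  proof -
    have "((\<lambda>s. X s $ i) has_vector_derivative X' t $ i) (at t)"
      by (rule bounded_linear.has_vector_derivative[OF bounded_linear_vec_nth X_deriv[OF t_in]])
    then have "((\<lambda>s. X s $ i $ j) has_vector_derivative X' t $ i $ j) (at t)"
      by (rule bounded_linear.has_vector_derivative[OF bounded_linear_vec_nth])
    then show ?thesis unfolding D_def has_real_derivative_iff_has_vector_derivative .
  qed
  have jac: "((\<lambda>s. det (X s)) has_real_derivative det X0 * trace (D ** Y)) (at t)"
    using jacobi[of X D t, OF comp] invX0 unfolding X0_def Y_def by simp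
  have dln: "((\<lambda>s. ln (det (X s))) has_real_derivative trace (D ** Y)) (at t)"
  proof -
    have "((\<lambda>s. ln (det (X s))) has_real_derivative 1 / det X0 * (det X0 * trace (D ** Y))) (at t)"
      using DERIV_chain2[OF DERIV_ln_divide jac] detpos X0_def by simp
    then show ?thesis using detpos by simp
  qed
  define G where "G = kron X0 X0"
  define Am where "Am = opA A"
  define M where "M = Am ** G ** transpose Am"
  define K where "K = matrix_inv M"
  define S where "S = G - G ** transpose Am ** K ** Am ** G"
  define u where "u = vecM Y"
  define c where "c = vecM C"
  have symG: "transpose G = G" unfolding G_def kron_transpose symX0 ..
  have psdG: "0 \<le> z \<bullet> (G *v z)" for z unfolding G_def by (rule G_form(1)[OF pd0])
  have symM: "transpose M = M" unfolding M_def
    by (simp add: matrix_transpose_mul symG matrix_mul_assoc)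
  have invM: "invertible M"
  proof (rule ker_invertible)
    fix y assume My: "M *v y = 0"
    have "y \<bullet> (M *v y) = (transpose Am *v y) \<bullet> (G *v (transpose Am *v y))"
      unfolding M_def matrix_vector_mul_assoc[symmetric] by (rule inner_mv_transpose)
    then have "(transpose Am *v y) \<bullet> (G *v (transpose Am *v y)) = 0" using My by simp
    then have "transpose Am *v y = 0" unfolding G_def by (rule G_form(2)[OF pd0])
    then have "(\<Sum>l\<in>UNIV. y$l *\<^sub>R A l) = 0" unfolding Am_def opA_transpose vecM_eq0 .
    then have "\<forall>l. y$l = 0" by (rule A_indep)
    then show "y = 0" by (simp add: vec_eq_iff)
  qed
  have KM: "K ** (Am ** G ** transpose Am) = mat 1" using inv_props[OF invM] unfolding K_def M_def by simp
  have symK: "transpose K = K" unfolding K_def by (rule inv_sym[OF invM symM])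
  note pr = proj[OF symG psdG KM symK, folded S_def]
  have vD: "vecM D = - (S *v c)"
  proof -
    have "vecM D = - ((mat 1 - G ** transpose Am ** K ** Am) ** G) *v c"
      using X_ode[OF t_in] unfolding D_def G_def Am_def K_def M_def c_def X0_def .
    also have "\<dots> = - (((mat 1 - G ** transpose Am ** K ** Am) ** G) *v c)"
      by (simp add: vec_eq_iff matrix_vector_mult_def sum_negf)
    also have "((mat 1 - G ** transpose Am ** K ** Am) ** G) *v c = S *v c"
      unfolding S_def
      by (simp only: matrix_vector_mul_assoc[symmetric] matrix_vector_mult_diff_rdistrib matrix_vector_mul_lid)
    finally show ?thesis .
  qed
  have trDY: "trace (D ** Y) = - (u \<bullet> (S *v c))"
  proof -
    have "trace (D ** Y) = trace (transpose Y ** D)" using trace_mul_sym symY by metis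
    also have "\<dots> = u \<bullet> vecM D" unfolding u_def vecM_inner ..
    finally show ?thesis unfolding vD by simp
  qed
  have uGu: "u \<bullet> (G *v u) = real CARD('n)"
  proof -
    have "u \<bullet> (G *v u) = trace (transpose Y ** (X0 ** Y ** X0))"
      unfolding u_def G_def kron_vec symX0 vecM_inner ..
    also have "X0 ** Y ** X0 = X0" using iX Y_def by simp
    also have "trace (transpose Y ** X0) = real CARD('n)"
      unfolding symY using iX Y_def trace_I by simp
    finally show ?thesis .
  qed
  have cGc: "c \<bullet> (G *v c) = trace (C ** X0 ** C ** X0)"
  proof -
    have "c \<bullet> (G *v c) = trace (transpose C ** (X0 ** C ** X0))"
      unfolding c_def G_def kron_vec symX0 vecM_inner ..
    then show ?thesis by (simp add: symC matrix_mul_assoc)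
  qed
  note tr = trace_CXCX[OF symC psdC symX0 psdX0]
  have "(u \<bullet> (S *v c))^2 \<le> (c \<bullet> (S *v c)) * (u \<bullet> (S *v u))"
    by (rule form_CS[OF pr(1) pr(2)])
  also have "\<dots> \<le> (c \<bullet> (G *v c)) * (u \<bullet> (G *v u))"
    by (intro mult_mono pr(2) pr(3) psdG)
  also have "\<dots> \<le> (trace (C ** X0))^2 * real CARD('n)"
    unfolding uGu cGc using tr(1) by (intro mult_right_mono) auto
  finally have sq: "(u \<bullet> (S *v c))^2 \<le> real CARD('n) * (trace (C ** X0))^2" by (simp add: mult.commute)
  have "- sqrt (real CARD('n)) * trace (C ** X t) \<le> trace (D ** Y)"
    using sqrt_bound[OF sq tr(2)] unfolding trDY X0_def by simp
  then show ?thesis using dln by blast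
qed


end
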